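(* Let $h,v$ be permutations of $\Lambda=\{1,\dots,d\}$ such that $\langle h,v\rangle$ acts transitively on $\Lambda$, and let $M\ge0$ be an integer. Then the combinatorial data $(\pi_0,\pi_1^M)$ is irreducible.
   Context: $\pi_0,\pi_1^M:\Lambda\times\{L,R\}\to\{1,\dots,2d\}$ are the bijections $\pi_0(\lambda,L)=2\lambda-1$, $\pi_0(\lambda,R)=2\lambda$, $\pi_1^M(\lambda,L)=2vh^M(\lambda)$, $\pi_1^M(\lambda,R)=2vh^{M+1}(\lambda)-1$. A pair of bijections $(\pi_0,\pi_1)$ from a $k$-element set $\mathcal{A}$ to $\{1,\dots,k\}$ is irreducible if there is no $1\le j<k$ with $\pi_0^{-1}(\{1,\dots,j\})=\pi_1^{-1}(\{1,\dots,j\})$. *)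

theory Defs
  imports "HOL-Combinatorics.Permutations"
begin

datatype side = L | R

definition alphabet :: "nat \<Rightarrow> (nat \<times> side) set" where
  "alphabet d = {1..d} \<times> UNIV"

definition pi0 :: "nat \<times> side \<Rightarrow> nat" where
  "pi0 a = (case a of (l, L) \<Rightarrow> 2 * l - 1 | (l, R) \<Rightarrow> 2 * l)"

definition pi1 :: "(nat \<Rightarrow> nat) \<Rightarrow> (nat \<Rightarrow> nat) \<Rightarrow> nat \<Rightarrow> nat \<times> side \<Rightarrow> nat" where
  "pi1 h v M a = (case a of (l, L) \<Rightarrow> 2 * v ((h ^^ M) l)
                           | (l, R) \<Rightarrow> 2 * v ((h ^^ (M + 1)) l) - 1)"

definition irreducible_pair :: "'a set \<Rightarrow> ('a \<Rightarrow> nat) \<Rightarrow> ('a \<Rightarrow> nat) \<Rightarrow> bool" where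
  "irreducible_pair A p0 p1 \<longleftrightarrow>
     bij_betw p0 A {1..card A} \<and> bij_betw p1 A {1..card A} \<and>
     \<not> (\<exists>j. 1 \<le> j \<and> j < card A \<and>
            {a \<in> A. p0 a \<in> {1..j}} = {a \<in> A. p1 a \<in> {1..j}})"

inductive_set gen_group :: "(nat \<Rightarrow> nat) \<Rightarrow> (nat \<Rightarrow> nat) \<Rightarrow> (nat \<Rightarrow> nat) set"
  for h v where
  gid: "id \<in> gen_group h v"
| gh: "g \<in> gen_group h v \<Longrightarrow> h \<circ> g \<in> gen_group h v"
| gv: "g \<in> gen_group h v \<Longrightarrow> v \<circ> g \<in> gen_group h v"
| ghi: "g \<in> gen_group h v \<Longrightarrow> inv h \<circ> g \<in> gen_group h v"
| gvi: "g \<in> gen_group h v \<Longrightarrow> inv v \<circ> g \<in> gen_group h v"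

definition transitive_on :: "(nat \<Rightarrow> nat) set \<Rightarrow> nat set \<Rightarrow> bool" where
  "transitive_on G S \<longleftrightarrow> (\<forall>x\<in>S. \<forall>y\<in>S. \<exists>g\<in>G. g x = y)"

end

theory Submission
  imports Defs
begin

lemma funpow_permutes: "h permutes S \<Longrightarrow> (h ^^ n) permutes S"
  by (induction n) (auto simp: permutes_id permutes_compose)

lemma card_alph: "card (alphabet d) = 2 * d"
proof -
  have "(UNIV :: side set) = {L, R}" using side.exhaust by blast
  moreover have "card {L, R} = 2" by simp
  ultimately have "card (UNIV :: side set) = 2" by metis
  then show ?thesis unfolding alphabet_def by (simp add: card_cartesian_product)
qed

lemma bij_pi0: "bij_betw pi0 (alphabet d) {1..2*d}"
proof (rule bij_betw_byWitness[where f' = "\<lambda>n. if even n then (n div 2, R) else ((n+1) div 2, L)"])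
  show "\<forall>a\<in>alphabet d. (\<lambda>n. if even n then (n div 2, R) else ((n+1) div 2, L)) (pi0 a) = a"
    unfolding alphabet_def pi0_def
    by (auto split: side.splits)
  show "\<forall>a\<in>{1..2*d}. pi0 ((\<lambda>n. if even n then (n div 2, R) else ((n+1) div 2, L)) a) = a"
    unfolding pi0_def by auto
  show "pi0 ` alphabet d \<subseteq> {1..2*d}"
    unfolding alphabet_def pi0_def by (auto split: side.splits)
  show "(\<lambda>n. if even n then (n div 2, R) else ((n+1) div 2, L)) ` {1..2*d} \<subseteq> alphabet d"
    unfolding alphabet_def by auto presburger+
qed

lemma bij_pi1:
  assumes f: "f permutes {1..d}" and g: "g permutes {1..d}"
    and p: "\<And>l. p (l, L) = 2 * f l" "\<And>l. p (l, R) = 2 * g l - 1"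
  shows "bij_betw p (alphabet d) {1..2*d}"
proof (rule bij_betw_byWitness[where f' = "\<lambda>n. if even n then (inv f (n div 2), L) else (inv g ((n+1) div 2), R)"])
  have fi: "\<And>x. f x \<in> {1..d} \<longleftrightarrow> x \<in> {1..d}" using permutes_in_image[OF f] by blast
  have gi: "\<And>x. g x \<in> {1..d} \<longleftrightarrow> x \<in> {1..d}" using permutes_in_image[OF g] by blast
  have fii: "\<And>x. inv f x \<in> {1..d} \<longleftrightarrow> x \<in> {1..d}" using permutes_in_image[OF permutes_inv[OF f]] by blast
  have gii: "\<And>x. inv g x \<in> {1..d} \<longleftrightarrow> x \<in> {1..d}" using permutes_in_image[OF permutes_inv[OF g]] by blast
  note inv = permutes_inverses[OF f] permutes_inverses[OF g]
  show "\<forall>a\<in>alphabet d. (\<lambda>n. if even n then (inv f (n div 2), L) else (inv g ((n+1) div 2), R)) (p a) = a"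
  proof
    fix a assume "a \<in> alphabet d"
    then obtain l s where a: "a = (l, s)" "l \<in> {1..d}" unfolding alphabet_def by auto
    show "(\<lambda>n. if even n then (inv f (n div 2), L) else (inv g ((n+1) div 2), R)) (p a) = a"
    proof (cases s)
      case L then show ?thesis using a p inv by simp
    next
      case R
      have "g l \<ge> 1" using gi a by auto
      then have "odd (2 * g l - 1)" "(2 * g l - 1 + 1) div 2 = g l" by presburger+
      then show ?thesis using a p inv R by simp
    qed
  qed
  show "\<forall>a\<in>{1..2*d}. p ((\<lambda>n. if even n then (inv f (n div 2), L) else (inv g ((n+1) div 2), R)) a) = a"
  proof
    fix a assume a: "a \<in> {1..2*d}"
    show "p ((\<lambda>n. if even n then (inv f (n div 2), L) else (inv g ((n+1) div 2), R)) a) = a"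
    proof (cases "even a")
      case True then show ?thesis using p inv by auto
    next
      case False then show ?thesis using p inv by auto
    qed
  qed
  show "p ` alphabet d \<subseteq> {1..2*d}"
  proof
    fix b assume "b \<in> p ` alphabet d"
    then obtain l s where b: "b = p (l, s)" "l \<in> {1..d}" unfolding alphabet_def by auto
    then show "b \<in> {1..2*d}" using fi[of l] gi[of l] p by (cases s) auto
  qed
  show "(\<lambda>n. if even n then (inv f (n div 2), L) else (inv g ((n+1) div 2), R)) ` {1..2*d} \<subseteq> alphabet d"
  proof
    fix b assume "b \<in> (\<lambda>n. if even n then (inv f (n div 2), L) else (inv g ((n+1) div 2), R)) ` {1..2*d}"
    then obtain n where n: "n \<in> {1..2*d}" "b = (if even n then (inv f (n div 2), L) else (inv g ((n+1) div 2), R))" by auto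
    have "even n \<Longrightarrow> n div 2 \<in> {1..d}" "odd n \<Longrightarrow> (n+1) div 2 \<in> {1..d}" using n(1) by auto presburger+
    then show "b \<in> alphabet d" using n fii gii unfolding alphabet_def by auto
  qed
qed

lemma invariant_not_trans:
  assumes h: "h permutes {1..d}" and v: "v permutes {1..d}"
    and tr: "transitive_on (gen_group h v) {1..d}"
    and k: "1 \<le> k" "k < d"
    and hi: "\<And>x. x \<in> {1..d} \<Longrightarrow> h x \<le> k \<longleftrightarrow> x \<le> k"
    and vi: "\<And>x. x \<in> {1..d} \<Longrightarrow> v x \<le> k \<longleftrightarrow> x \<le> k"
  shows False
proof -
  have hii: "inv h x \<le> k \<longleftrightarrow> x \<le> k" if "x \<in> {1..d}" for x
    using hi[of "inv h x"] permutes_in_image[OF permutes_inv[OF h]] permutes_inverses[OF h] that by metis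
  have vii: "inv v x \<le> k \<longleftrightarrow> x \<le> k" if "x \<in> {1..d}" for x
    using vi[of "inv v x"] permutes_in_image[OF permutes_inv[OF v]] permutes_inverses[OF v] that by metis
  have all: "\<forall>x\<in>{1..d}. g x \<in> {1..d} \<and> (g x \<le> k \<longleftrightarrow> x \<le> k)" if "g \<in> gen_group h v" for g
    using that
  proof (induction rule: gen_group.induct)
    case gid then show ?case by simp
  next
    case (gh g) then show ?case using hi permutes_in_image[OF h] by auto
  next
    case (gv g) then show ?case using vi permutes_in_image[OF v] by auto
  next
    case (ghi g) then show ?case using hii permutes_in_image[OF permutes_inv[OF h]] by auto
  next
    case (gvi g) then show ?case using vii permutes_in_image[OF permutes_inv[OF v]] by auto
  qed
  obtain g where gg: "g \<in> gen_group h v" "g 1 = d"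
    using tr k unfolding transitive_on_def by fastforce
  have "1 \<in> {1..d}" using k by simp
  then have "g 1 \<le> k \<longleftrightarrow> 1 \<le> k" using all[OF gg(1)] by blast
  then show False using k gg(2) by simp
qed

theorem corollary5p3:
  fixes d M :: nat and h v :: "nat \<Rightarrow> nat"
  assumes "h permutes {1..d}" and "v permutes {1..d}"
    and "transitive_on (gen_group h v) {1..d}"
  shows "irreducible_pair (alphabet d) pi0 (pi1 h v M)"
proof -
  let ?A = "alphabet d"
  let ?H = "h ^^ M"
  define f where "f = v \<circ> ?H"
  define g where "g = v \<circ> (h ^^ (M + 1))"
  have H: "?H permutes {1..d}" using funpow_permutes[OF assms(1)] .
  have f: "f permutes {1..d}" unfolding f_def by (rule permutes_compose[OF H assms(2)])
  have g: "g permutes {1..d}" unfolding g_def by (rule permutes_compose[OF funpow_permutes[OF assms(1)] assms(2)])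
  have p1L: "\<And>l. pi1 h v M (l, L) = 2 * f l" unfolding pi1_def f_def by simp
  have p1R: "\<And>l. pi1 h v M (l, R) = 2 * g l - 1" unfolding pi1_def g_def by simp
  have gf: "\<And>l. g l = f (h l)" unfolding f_def g_def by (simp add: funpow_swap1)
  have fi: "\<And>x. f x \<in> {1..d} \<longleftrightarrow> x \<in> {1..d}" using permutes_in_image[OF f] by blast
  have gi: "\<And>x. g x \<in> {1..d} \<longleftrightarrow> x \<in> {1..d}" using permutes_in_image[OF g] by blast
  have hin: "\<And>x. h x \<in> {1..d} \<longleftrightarrow> x \<in> {1..d}" using permutes_in_image[OF assms(1)] by blast
  have b0: "bij_betw pi0 ?A {1..card ?A}" unfolding card_alph by (rule bij_pi0)
  have b1: "bij_betw (pi1 h v M) ?A {1..card ?A}" unfolding card_alph by (rule bij_pi1[OF f g p1L p1R])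
  have "\<not> (\<exists>j. 1 \<le> j \<and> j < card ?A \<and>
            {a \<in> ?A. pi0 a \<in> {1..j}} = {a \<in> ?A. pi1 h v M a \<in> {1..j}})"
  proof
    assume "\<exists>j. 1 \<le> j \<and> j < card ?A \<and>
            {a \<in> ?A. pi0 a \<in> {1..j}} = {a \<in> ?A. pi1 h v M a \<in> {1..j}}"
    then obtain j where j: "1 \<le> j" "j < 2 * d"
      and E: "{a \<in> ?A. pi0 a \<in> {1..j}} = {a \<in> ?A. pi1 h v M a \<in> {1..j}}"
      unfolding card_alph by blast
    have mem: "(pi0 (l, s) \<in> {1..j}) = (pi1 h v M (l, s) \<in> {1..j})" if "l \<in> {1..d}" for l s
    proof -
      have "(l, s) \<in> ?A" using that unfolding alphabet_def by simp
      moreover have "(l, s) \<in> {a \<in> ?A. pi0 a \<in> {1..j}} \<longleftrightarrow> (l, s) \<in> {a \<in> ?A. pi1 h v M a \<in> {1..j}}"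
        using E by simp
      ultimately show ?thesis by simp
    qed
    show False
    proof (cases "even j")
      case True
      then obtain k where jk: "j = 2 * k" by blast
      have k: "1 \<le> k" "k < d" using j jk by auto
      have eqL: "l \<le> k \<longleftrightarrow> f l \<le> k" if "l \<in> {1..d}" for l
      proof -
        have "(2*l - 1 \<in> {1..j}) = (2 * f l \<in> {1..j})" using mem[OF that, of L] p1L[of l] by (simp add: pi0_def)
        moreover have "1 \<le> l" "1 \<le> f l" using that fi[of l] by auto
        ultimately show ?thesis using jk by (simp only: atLeastAtMost_iff) arith
      qed
      have eqR: "l \<le> k \<longleftrightarrow> g l \<le> k" if "l \<in> {1..d}" for l
      proof -
        have "(2*l \<in> {1..j}) = (2 * g l - 1 \<in> {1..j})" using mem[OF that, of R] p1R[of l] by (simp add: pi0_def)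
        moreover have "1 \<le> l" "1 \<le> g l" using that gi[of l] by auto
        ultimately show ?thesis using jk by (simp only: atLeastAtMost_iff) arith
      qed
      have hi: "h x \<le> k \<longleftrightarrow> x \<le> k" if "x \<in> {1..d}" for x
        using eqR[OF that] eqL[of "h x"] hin[of x] that gf by auto
      have Hi: "(h ^^ n) x \<le> k \<longleftrightarrow> x \<le> k" if "x \<in> {1..d}" for x n
      proof (induction n)
        case 0 then show ?case by simp
      next
        case (Suc n)
        have "(h ^^ n) x \<in> {1..d}" using permutes_in_image[OF funpow_permutes[OF assms(1)]] that by blast
        then show ?case using hi Suc by simp
      qed
      have vi: "v z \<le> k \<longleftrightarrow> z \<le> k" if "z \<in> {1..d}" for z
      proof -
        define l where "l = inv ?H z"
        have l: "l \<in> {1..d}" "?H l = z" unfolding l_def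
          using permutes_in_image[OF permutes_inv[OF H]] permutes_inverses[OF H] that by auto
        show ?thesis using eqL[OF l(1)] Hi[OF l(1), of M] l(2) unfolding f_def by auto
      qed
      show False using invariant_not_trans[OF assms k hi vi] .
    next
      case False
      then obtain k where jk: "j = 2 * k + 1" by (metis oddE)
      have k: "k < d" using j jk by auto
      have sub: "f ` {1..k+1} \<subseteq> {1..k}"
      proof
        fix y assume "y \<in> f ` {1..k+1}"
        then obtain l where l: "l \<in> {1..k+1}" "y = f l" by auto
        have ld: "l \<in> {1..d}" using l k by auto
        have "(2*l - 1 \<in> {1..j}) = (2 * f l \<in> {1..j})" using mem[OF ld, of L] p1L[of l] by (simp add: pi0_def)
        moreover have "1 \<le> l" "1 \<le> f l" using ld fi[of l] by auto
        ultimately show "y \<in> {1..k}" using jk l by (simp only: atLeastAtMost_iff) arith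
      qed
      have "card {1..k+1} \<le> card {1..k}"
        by (rule card_inj_on_le[OF permutes_inj_on[OF f] sub]) simp
      then show False by simp
    qed
  qed
  then show ?thesis unfolding irreducible_pair_def using b0 b1 by blast
qed

end
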